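(* Let $\sigma$ be a two-qubit density matrix, $U$ a single-qubit unitary, and $R>0$, $T>0$. Consider the following test round. The client chooses $d\in\{0,1\}$, $\theta\in\Theta$ and $r\in\{0,1\}$ uniformly and independently. A dummy qubit in state $|d\rangle$ and a trap qubit in state $|+_\theta\rangle$ are each transmitted to the server through the rotated teleportation channel $\Lambda_{\sigma,U}$ (each using its own copy of $\sigma$). The entangled states are delivered at random times whose inter-delivery times are independent and identically distributed; let $\Delta t$ be the time between the delivery of the two qubits, with $\mathbb{E}[\Delta t]=1/R$, and $\Delta t$ independent of $(d,\theta,r)$. The qubit delivered first (either one) is stored during time $\Delta t$ in a depolarizing memory with coherence time $T$, i.e. it undergoes $\rho\mapsto p\rho+(1-p)\mathbf 1/2$ with $p=e^{-\Delta t/T}$. All local operations are noiseless and instantaneous. The server then applies a controlled-$Z$ gate to the two qubits and measures the trap qubit in the basis $\{|+_\delta\rangle,|-_\delta\rangle\}$ with $\delta=\theta+r\pi$ (outcome $0$ for $|+_\delta\rangle$, $1$ for $|-_\delta\rangle$); the round fails if the outcome differs from $d\oplus r$. Let $q$ be the expected failure probability (averaged over $d,\theta,r,\Delta t$ and the measurement). Define $$\bar F_{\mathrm{dummy}}=\tfrac12\big(\langle 0|\Lambda_{\sigma,U}(|0\rangle\langle0|)|0\rangle+\langle 1|\Lambda_{\sigma,U}(|1\rangle\langle1|)|1\rangle\big),\qquad \bar F_{\mathrm{trap}}=\tfrac18\sum_{\theta\in\Theta}\langle+_\theta|\Lambda_{\sigma,U}(|+_\theta\rangle\langle+_\theta|)|+_\theta\rangle.$$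 If $\bar F_{\mathrm{dummy}}(1-\bar F_{\mathrm{trap}})+\bar F_{\mathrm{trap}}(1-\bar F_{\mathrm{dummy}})\le\frac12$, then $$q\le e^{-\frac{1}{RT}}\Big[\bar F_{\mathrm{dummy}}(1-\bar F_{\mathrm{trap}})+\bar F_{\mathrm{trap}}(1-\bar F_{\mathrm{dummy}})\Big]+\tfrac12\big(1-e^{-\frac{1}{RT}}\big).$$
   Context: $\Theta=\{i\pi/4\}_{0\le i\le7}$ and $|\pm_\theta\rangle=\frac1{\sqrt2}(|0\rangle\pm e^{i\theta}|1\rangle)$. Let $|\Phi^+\rangle=\frac1{\sqrt2}(|00\rangle+|11\rangle)$ and $|\Phi_{ij}\rangle=(X^iZ^j\otimes\mathbf 1)|\Phi^+\rangle$ for $i,j\in\{0,1\}$. For a two-qubit state $\sigma$ on registers $S$ (sender) and $R$ (receiver), the teleportation channel is the single-qubit channel $\Lambda_\sigma(\rho)=\sum_{i,j\in\{0,1\}}X^iZ^j\,\langle\Phi_{ij}|_{IS}(\rho_I\otimes\sigma_{SR})|\Phi_{ij}\rangle_{IS}\,(X^iZ^j)^\dagger$ (Bell measurement on the input register $I$ and $S$, followed by Pauli correction on $R$). For a single-qubit unitary $U$, the rotated teleportation channel is $\Lambda_{\sigma,U}(\rho)=U^\dagger\Lambda_\sigma(U\rho U^\dagger)U$. *)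

theory Defs
  imports "HOL-Probability.Probability"
begin

text \<open>A qubit is indexed by bool (False = |0>, True = |1>); two-qubit objects
  are indexed by bool \<times> bool (first component = first tensor factor).\<close>

type_synonym 'i qvec = "'i \<Rightarrow> complex"
type_synonym 'i qop = "'i \<Rightarrow> 'i \<Rightarrow> complex"

definition mmul :: "('i::finite) qop \<Rightarrow> 'i qop \<Rightarrow> 'i qop" where
  "mmul A B = (\<lambda>i j. \<Sum>k\<in>UNIV. A i k * B k j)"

definition adj :: "'i qop \<Rightarrow> 'i qop" where
  "adj A = (\<lambda>i j. cnj (A j i))"

definition idop :: "'i qop" where
  "idop = (\<lambda>i j. if i = j then 1 else 0)"

definition apply_op :: "('i::finite) qop \<Rightarrow> 'i qvec \<Rightarrow> 'i qvec" where
  "apply_op A v = (\<lambda>i. \<Sum>j\<in>UNIV. A i j * v j)"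

definition ket_bra :: "'i qvec \<Rightarrow> 'i qvec \<Rightarrow> 'i qop" where
  "ket_bra u v = (\<lambda>i j. u i * cnj (v j))"

definition expval :: "('i::finite) qvec \<Rightarrow> 'i qop \<Rightarrow> complex" where
  "expval v A = (\<Sum>i\<in>UNIV. \<Sum>j\<in>UNIV. cnj (v i) * A i j * v j)"

definition trace :: "('i::finite) qop \<Rightarrow> complex" where
  "trace A = (\<Sum>i\<in>UNIV. A i i)"

definition tensor :: "'i qop \<Rightarrow> 'j qop \<Rightarrow> ('i \<times> 'j) qop" where
  "tensor A B = (\<lambda>(i1, i2) (j1, j2). A i1 j1 * B i2 j2)"

definition hermitian :: "'i qop \<Rightarrow> bool" where
  "hermitian A \<longleftrightarrow> adj A = A"

definition positive_semidef :: "('i::finite) qop \<Rightarrow> bool" where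
  "positive_semidef A \<longleftrightarrow> hermitian A \<and> (\<forall>v. 0 \<le> Re (expval v A))"

definition density :: "('i::finite) qop \<Rightarrow> bool" where
  "density A \<longleftrightarrow> positive_semidef A \<and> trace A = 1"

definition unitary_op :: "('i::finite) qop \<Rightarrow> bool" where
  "unitary_op U \<longleftrightarrow> mmul (adj U) U = idop"

definition ket :: "bool \<Rightarrow> bool qvec" where
  "ket b = (\<lambda>i. if i = b then 1 else 0)"

text \<open>pm s th = |+_th> if s = False, |-_th> if s = True.\<close>
definition pm :: "bool \<Rightarrow> real \<Rightarrow> bool qvec" where
  "pm s th = (\<lambda>i. if i then (if s then -1 else 1) * cis th / complex_of_real (sqrt 2)
                   else 1 / complex_of_real (sqrt 2))"

definition pauliX :: "bool qop" where
  "pauliX = (\<lambda>i j. if i \<noteq> j then 1 else 0)"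

definition pauliZ :: "bool qop" where
  "pauliZ = (\<lambda>i j. if i = j then (if i then -1 else 1) else 0)"

definition pauli :: "bool \<Rightarrow> bool \<Rightarrow> bool qop" where
  "pauli a b = mmul (if a then pauliX else idop) (if b then pauliZ else idop)"

definition PhiPlus :: "(bool \<times> bool) qvec" where
  "PhiPlus = (\<lambda>(a, b). if a = b then 1 / complex_of_real (sqrt 2) else 0)"

definition Phi :: "bool \<Rightarrow> bool \<Rightarrow> (bool \<times> bool) qvec" where
  "Phi a b = apply_op (tensor (pauli a b) idop) PhiPlus"

text \<open>(<phi|_{IS} \<otimes> 1_R)(rho_I \<otimes> sigma_SR)(|phi>_{IS} \<otimes> 1_R), an operator on R.\<close>
definition bell_proj :: "(bool \<times> bool) qvec \<Rightarrow> bool qop \<Rightarrow> (bool \<times> bool) qop \<Rightarrow> bool qop" where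
  "bell_proj phi rho sg = (\<lambda>r r'.
     \<Sum>a\<in>UNIV. \<Sum>b\<in>UNIV. \<Sum>a'\<in>UNIV. \<Sum>b'\<in>UNIV.
       cnj (phi (a, b)) * rho a a' * sg (b, r) (b', r') * phi (a', b'))"

definition teleport :: "(bool \<times> bool) qop \<Rightarrow> bool qop \<Rightarrow> bool qop" where
  "teleport sg rho = (\<lambda>r r'. \<Sum>a\<in>UNIV. \<Sum>b\<in>UNIV.
     mmul (mmul (pauli a b) (bell_proj (Phi a b) rho sg)) (adj (pauli a b)) r r')"

definition rot_teleport :: "(bool \<times> bool) qop \<Rightarrow> bool qop \<Rightarrow> bool qop \<Rightarrow> bool qop" where
  "rot_teleport sg U rho = mmul (mmul (adj U) (teleport sg (mmul (mmul U rho) (adj U)))) U"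

definition depolarize :: "real \<Rightarrow> bool qop \<Rightarrow> bool qop" where
  "depolarize p rho = (\<lambda>i j. complex_of_real p * rho i j + complex_of_real (1 - p) * idop i j / 2)"

definition CZ :: "(bool \<times> bool) qop" where
  "CZ = (\<lambda>(a, b) (a', b'). if (a, b) = (a', b') then (if a \<and> b then -1 else 1) else 0)"

definition Theta :: "nat \<Rightarrow> real" where
  "Theta k = real k * pi / 4"

text \<open>Failure probability of the test round for a fixed storage time, with
  depolarizing parameter p applied to the qubit stored first
  (dummy_first = True: dummy qubit stored; False: trap qubit stored).
  Tensor order: (dummy, trap).
  The round fails iff outcome (True = |-_delta>) differs from d xor r,
  i.e. iff the outcome is (d = r).\<close>
definition fail_prob :: "(bool \<times> bool) qop \<Rightarrow> bool qop \<Rightarrow> real \<Rightarrow> bool \<Rightarrow> real" where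
  "fail_prob sg U p dummy_first = (1 / 32) *
     (\<Sum>d\<in>(UNIV::bool set). \<Sum>k<8. \<Sum>r\<in>(UNIV::bool set).
        let th = Theta k;
            delta = th + (if r then pi else 0);
            rho_d = rot_teleport sg U (ket_bra (ket d) (ket d));
            rho_t = rot_teleport sg U (ket_bra (pm False th) (pm False th));
            st = tensor (if dummy_first then depolarize p rho_d else rho_d)
                        (if dummy_first then rho_t else depolarize p rho_t);
            st' = mmul (mmul CZ st) (adj CZ);
            v = pm (d = r) delta
        in Re (trace (mmul (tensor idop (ket_bra v v)) st')))"

definition F_dummy :: "(bool \<times> bool) qop \<Rightarrow> bool qop \<Rightarrow> real" where
  "F_dummy sg U = (1 / 2) *
     (Re (expval (ket False) (rot_teleport sg U (ket_bra (ket False) (ket False)))) +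
      Re (expval (ket True) (rot_teleport sg U (ket_bra (ket True) (ket True)))))"

definition F_trap :: "(bool \<times> bool) qop \<Rightarrow> bool qop \<Rightarrow> real" where
  "F_trap sg U = (1 / 8) * (\<Sum>k<8.
     Re (expval (pm False (Theta k)) (rot_teleport sg U (ket_bra (pm False (Theta k)) (pm False (Theta k))))))"

end

theory Submission
  imports Defs
begin


lemma sum_bool: "(\<Sum>x\<in>(UNIV::bool set). f x) = f False + f True"
  by (simp add: UNIV_bool)

lemma UNIV_bool2: "(UNIV::(bool\<times>bool) set) = {(False,False),(False,True),(True,False),(True,True)}" by auto

lemma sum_bool2: "(\<Sum>x\<in>(UNIV::(bool\<times>bool) set). f x) = f (False,False) + f (False,True) + f (True,False) + f (True,True)"
  unfolding UNIV_bool2 by (simp add: add.assoc)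

definition hh :: complex where "hh = 1 / complex_of_real (sqrt 2)"
lemma hh2: "hh * hh = 1/2"
proof -
  have "complex_of_real (sqrt 2) * complex_of_real (sqrt 2) = 2"
    by (simp flip: of_real_mult)
  then show ?thesis unfolding hh_def by (simp add: field_simps)
qed
lemma hh2': "hh * (hh * x) = x/2"
  by (simp add: mult.assoc[symmetric] hh2)
lemma cnj_hh[simp]: "cnj hh = hh" unfolding hh_def by simp

lemma Phi_vals: "Phi a b (x,y) = (if x = (y \<noteq> a) then (if b \<and> y then -hh else hh) else 0)"
  by (cases a; cases b; cases x; cases y) (simp_all add: hh_def Phi_def apply_op_def tensor_def pauli_def mmul_def pauliX_def pauliZ_def idop_def PhiPlus_def sum_bool2 sum_bool)

lemma bell_sum: "(\<Sum>a\<in>UNIV. \<Sum>b\<in>UNIV. bell_proj (Phi a b) rho sg r r') = 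
   (\<Sum>x\<in>UNIV. \<Sum>y\<in>UNIV. rho x x * sg (y,r) (y,r'))"
  unfolding bell_proj_def
  apply (simp add: sum_bool Phi_vals)
  apply (simp add: algebra_simps hh2 hh2')
  done

lemma adj_mmul: "adj (mmul A B) = mmul (adj B) (adj A)"
  by (simp add: adj_def mmul_def fun_eq_iff mult.commute)
lemma adj_adj[simp]: "adj (adj A) = A" by (simp add: adj_def)
lemma mmul_assoc: "mmul (mmul A B) C = mmul A (mmul B (C::('i::finite) qop))"
  apply (simp add: mmul_def fun_eq_iff sum_distrib_left sum_distrib_right mult.assoc)
  apply (intro allI)
  apply (rule sum.swap)
  done
lemma trace_comm: "trace (mmul A B) = trace (mmul B (A::('i::finite) qop))"
  by (simp add: trace_def mmul_def mult.commute) (rule sum.swap)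
lemma mmul_id[simp]: "mmul idop A = A" "mmul A idop = A"
  by (simp_all add: mmul_def idop_def fun_eq_iff if_distrib if_distribR sum.delta sum.delta' cong: if_cong)

lemma pauli_unit: "mmul (adj (pauli a b)) (pauli a b) = idop"
  by (cases a; cases b) (auto simp: fun_eq_iff pauli_def mmul_def adj_def idop_def pauliX_def pauliZ_def sum_bool)

lemma trace_conj: "mmul (adj P) P = idop \<Longrightarrow> trace (mmul (mmul P B) (adj P)) = trace B"
  by (metis mmul_assoc trace_comm mmul_id(1))

lemma tele_trace: "trace (teleport sg rho) = trace rho * trace sg"
proof -
  have "trace (teleport sg rho) = (\<Sum>a\<in>UNIV. \<Sum>b\<in>UNIV. trace (mmul (mmul (pauli a b) (bell_proj (Phi a b) rho sg)) (adj (pauli a b))))"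
    unfolding trace_def teleport_def by (simp add: sum_bool)
  also have "\<dots> = (\<Sum>a\<in>UNIV. \<Sum>b\<in>UNIV. trace (bell_proj (Phi a b) rho sg))"
    by (simp add: trace_conj pauli_unit)
  also have "\<dots> = (\<Sum>r\<in>UNIV. \<Sum>a\<in>UNIV. \<Sum>b\<in>UNIV. bell_proj (Phi a b) rho sg r r)"
    unfolding trace_def by (simp add: sum_bool)
  also have "\<dots> = (\<Sum>r\<in>UNIV. \<Sum>x\<in>UNIV. \<Sum>y\<in>UNIV. rho x x * sg (y,r) (y,r))"
    by (simp add: bell_sum)
  also have "\<dots> = trace rho * trace sg"
    unfolding trace_def by (simp add: sum_bool sum_bool2 algebra_simps)
  finally show ?thesis .
qed

lemma adj_bell: "adj (bell_proj phi rho sg) = bell_proj phi (adj rho) (adj sg)"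
  unfolding adj_def bell_proj_def fun_eq_iff
  by (simp add: sum_bool algebra_simps)

lemma adj_conj: "adj (mmul (mmul P B) (adj P)) = mmul (mmul P (adj B)) (adj P)"
  by (simp add: adj_mmul mmul_assoc)

lemma adj_tele: "adj (teleport sg rho) = teleport (adj sg) (adj rho)"
proof -
  have "adj (teleport sg rho) r r' = teleport (adj sg) (adj rho) r r'" for r r'
  proof -
    have "adj (teleport sg rho) r r' = (\<Sum>a\<in>UNIV. \<Sum>b\<in>UNIV. adj (mmul (mmul (pauli a b) (bell_proj (Phi a b) rho sg)) (adj (pauli a b))) r r')"
      unfolding teleport_def by (simp add: adj_def)
    then show ?thesis unfolding adj_conj adj_bell teleport_def by simp
  qed
  then show ?thesis by (simp add: fun_eq_iff)
qed

lemma unitary_right: assumes "mmul (adj U) U = idop" shows "mmul U (adj U) = (idop :: bool qop)"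
proof -
  let ?a = "U False False" and ?b = "U False True" and ?c = "U True False" and ?d = "U True True"
  have e: "cnj ?a * ?a + cnj ?c * ?c = 1" "cnj ?a * ?b + cnj ?c * ?d = 0"
     "cnj ?b * ?a + cnj ?d * ?c = 0" "cnj ?b * ?b + cnj ?d * ?d = 1"
    using assms unfolding fun_eq_iff mmul_def adj_def idop_def
    by (auto simp: sum_bool dest: spec[of _ False] spec[of _ True])
  have g: "?a * cnj ?a + ?b * cnj ?b = 1" "?a * cnj ?c + ?b * cnj ?d = 0"
     "?c * cnj ?a + ?d * cnj ?b = 0" "?c * cnj ?c + ?d * cnj ?d = 1"
    using e by algebra+
  show ?thesis unfolding fun_eq_iff mmul_def adj_def idop_def
    apply (intro allI)
    subgoal for x y by (cases x; cases y) (use g in \<open>auto simp: sum_bool\<close>)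
    done
qed


lemma meas: "trace (mmul (tensor idop (ket_bra v v)) (mmul (mmul CZ (tensor A B)) (adj CZ)))
   = A False False * expval v B + A True True * expval (apply_op pauliZ v) B"
  unfolding trace_def mmul_def tensor_def ket_bra_def CZ_def adj_def expval_def apply_op_def pauliZ_def idop_def
  by (simp add: sum_bool sum_bool2 algebra_simps)

lemma herm_kb: "hermitian (ket_bra u u)" by (simp add: hermitian_def adj_def ket_bra_def fun_eq_iff mult.commute)

lemma herm_conj: "hermitian X \<Longrightarrow> hermitian (mmul (mmul P X) (adj P))"
  by (simp add: hermitian_def adj_conj)

lemma herm_tele: "hermitian sg \<Longrightarrow> hermitian rho \<Longrightarrow> hermitian (teleport sg rho)"
  by (simp add: hermitian_def adj_tele)

lemma herm_rot: "hermitian sg \<Longrightarrow> hermitian rho \<Longrightarrow> hermitian (rot_teleport sg U rho)"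
  unfolding rot_teleport_def
  using herm_conj[of "teleport sg (mmul (mmul U rho) (adj U))" "adj U"]
  by (simp add: herm_tele herm_conj)

lemma trace_rot: "unitary_op U \<Longrightarrow> trace (rot_teleport sg U rho) = trace rho * trace sg"
proof -
  assume u: "unitary_op U"
  then have u1: "mmul (adj U) U = idop" by (simp add: unitary_op_def)
  then have u2: "mmul (adj (adj U)) (adj U) = idop" using unitary_right by simp
  show ?thesis unfolding rot_teleport_def
    using trace_conj[OF u2, of "teleport sg (mmul (mmul U rho) (adj U))"]
    by (simp add: tele_trace trace_conj[OF u1])
qed

lemma pm_alt: "pm s th = (\<lambda>i. if i then (if s then -1 else 1) * cis th * hh else hh)"
  by (simp add: pm_def hh_def fun_eq_iff)

lemma trace_kb_ket: "trace (ket_bra (ket b) (ket b)) = 1"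
  by (cases b) (simp_all add: trace_def ket_bra_def ket_def sum_bool)

lemma cis_cnj1: "cis t * cnj (cis t) = 1"
  by (simp add: cis_cnj complex_eq_iff)

lemma trace_kb_pm: "trace (ket_bra (pm s th) (pm s th)) = 1"
  by (cases s) (simp_all add: trace_def ket_bra_def pm_alt sum_bool algebra_simps hh2 hh2' cis_cnj1)

lemma expval_ket: "expval (ket b) B = B b b"
  by (cases b) (simp_all add: expval_def ket_def sum_bool)

lemma expval_cnj: "cnj (expval (v::bool qvec) B) = expval v (adj B)"
  by (simp add: expval_def adj_def sum_bool algebra_simps)
lemma expval_real: "hermitian (B::bool qop) \<Longrightarrow> Im (expval v B) = 0"
  using expval_cnj[of v B] by (simp add: hermitian_def complex_eq_iff)

lemma diag_real: "hermitian (B::bool qop) \<Longrightarrow> Im (B b b) = 0"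
  using expval_real[of B "ket b"] by (simp add: expval_ket)

lemma expval_pm_sum: "expval (pm False th) B + expval (pm True th) B = trace B"
  by (simp add: expval_def trace_def pm_alt sum_bool algebra_simps hh2 hh2' cis_cnj1)

lemma expval_lin: "expval (v::bool qvec) (depolarize p B) = p * expval v B + (1-p)/2 * expval v idop"
  by (simp add: expval_def depolarize_def sum_bool algebra_simps)

lemma expval_pm_id: "expval (pm s th) idop = 1"
  by (cases s) (simp_all add: expval_def idop_def pm_alt sum_bool algebra_simps hh2 hh2' cis_cnj1)

lemma expval_depol: "expval (pm s th) (depolarize p B) = p * expval (pm s th) B + (1-p)/2"
  by (simp add: expval_lin expval_pm_id)

lemma depol_diag: "depolarize p B b b = p * B b b + (1-p)/2"
  by (simp add: depolarize_def idop_def)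

lemma herm_depol: "hermitian B \<Longrightarrow> hermitian (depolarize p B)"
  by (simp add: hermitian_def depolarize_def adj_def idop_def fun_eq_iff)

lemma pm_shift: "pm s (th + pi) = pm (\<not>s) th"
  by (simp add: pm_def fun_eq_iff cis.ctr complex_eq_iff)

lemma Zpm: "apply_op pauliZ (pm s th) = pm (\<not>s) th"
  by (simp add: pm_def apply_op_def pauliZ_def fun_eq_iff sum_bool)


definition gg :: "real \<Rightarrow> real \<Rightarrow> real" where "gg x y = x * (1 - y) + (1 - x) * y"

lemma re_real: "Im z = 0 \<Longrightarrow> z = complex_of_real (Re z)"
  by (simp add: complex_eq_iff)

lemma term_val:
  assumes hA: "hermitian A" and tA: "trace A = 1" and hB: "hermitian B" and tB: "trace B = 1"
  shows "Re (trace (mmul (tensor idop (ket_bra (pm (d = r) (th + (if r then pi else 0))) (pm (d = r) (th + (if r then pi else 0)))))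
            (mmul (mmul CZ (tensor A B)) (adj CZ))))
         = gg (Re (A d d)) (Re (expval (pm False th) B))"
proof -
  have v: "pm (d = r) (th + (if r then pi else 0)) = pm (\<not> d) th"
    by (cases r) (simp_all add: pm_shift)
  have A1: "A True True = 1 - A False False" using tA by (simp add: trace_def sum_bool algebra_simps)
  have B1: "expval (pm True th) B = 1 - expval (pm False th) B"
    using expval_pm_sum[of th B] tB by (simp add: algebra_simps)
  have rA: "A False False = complex_of_real (Re (A False False))"
    using diag_real[OF hA] by (simp add: complex_eq_iff)
  have rB: "expval (pm False th) B = complex_of_real (Re (expval (pm False th) B))"
    using expval_real[OF hB] by (simp add: complex_eq_iff)
  show ?thesis
    unfolding v meas Zpm
    by (cases d) (simp_all add: A1 B1 gg_def algebra_simps diag_real[OF hA] expval_real[OF hB])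
qed

lemma sum_calc: "(1/32) * (\<Sum>d\<in>(UNIV::bool set). \<Sum>k<(8::nat). \<Sum>r\<in>(UNIV::bool set). gg (a d) (f k))
   = gg ((a False + a True)/2) ((\<Sum>k<8. f k)/8)"
proof -
  have h: "(\<Sum>k<(8::nat). gg x (f k)) = 8 * x + (\<Sum>k<8. f k) - 2 * x * (\<Sum>k<8. f k)" for x
    by (simp add: gg_def sum.distrib sum_subtractf sum_distrib_left algebra_simps)
  have e1: "(\<Sum>r\<in>(UNIV::bool set). gg (a d) (f k)) = 2 * gg (a d) (f k)" for d k
    by (simp add: sum_bool)
  have e2: "(\<Sum>k<(8::nat). 2 * gg (a d) (f k)) = 2 * (\<Sum>k<(8::nat). gg (a d) (f k))" for d
    by (simp add: sum_distrib_left)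
  show ?thesis unfolding e1 e2 h sum_bool by (simp add: gg_def field_simps)
qed

lemma gg_dep1: "gg (p * x + (1-p)/2) y = p * gg x y + (1-p)/2"
  unfolding gg_def by (simp add: field_simps)
lemma gg_dep2: "gg x (p * y + (1-p)/2) = p * gg x y + (1-p)/2"
  unfolding gg_def by (simp add: field_simps)

lemma trace_depol: "trace (depolarize p (B::bool qop)) = p * trace B + (1 - p)"
  by (simp add: trace_def depolarize_def idop_def sum_bool algebra_simps)



lemma fail_formula:
  assumes ds: "density sg" and u: "unitary_op U"
  shows "fail_prob sg U p df = p * (F_dummy sg U * (1 - F_trap sg U) + F_trap sg U * (1 - F_dummy sg U)) + (1 - p)/2"
proof -
  define rd where "rd d = rot_teleport sg U (ket_bra (ket d) (ket d))" for d
  define rt where "rt k = rot_teleport sg U (ket_bra (pm False (Theta k)) (pm False (Theta k)))" for k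
  define a where "a d = Re (rd d d d)" for d
  define f where "f k = Re (expval (pm False (Theta k)) (rt k))" for k
  define a' where "a' d = (if df then p * a d + (1-p)/2 else a d)" for d
  define f' where "f' k = (if df then f k else p * f k + (1-p)/2)" for k
  have hs: "hermitian sg" and ts: "trace sg = 1" using ds by (auto simp: density_def positive_semidef_def)
  have hrd: "hermitian (rd d)" and trd: "trace (rd d) = 1" for d
    unfolding rd_def by (auto simp: herm_rot hs herm_kb trace_rot u trace_kb_ket ts)
  have hrt: "hermitian (rt k)" and trt: "trace (rt k) = 1" for k
    unfolding rt_def by (auto simp: herm_rot hs herm_kb trace_rot u trace_kb_pm ts)
  have tm: "Re (trace (mmul (tensor idop (ket_bra (pm (d = r) (Theta k + (if r then pi else 0))) (pm (d = r) (Theta k + (if r then pi else 0)))))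
            (mmul (mmul CZ (tensor (if df then depolarize p (rd d) else rd d) (if df then rt k else depolarize p (rt k)))) (adj CZ))))
         = gg (a' d) (f' k)" for d k r
  proof (cases df)
    case True
    have "Re (depolarize p (rd d) d d) = p * a d + (1-p)/2"
      by (simp add: depol_diag a_def)
    then show ?thesis using True
      by (simp add: term_val herm_depol hrd hrt trd trt trace_depol a'_def f'_def f_def)
  next
    case False
    have "Re (expval (pm False (Theta k)) (depolarize p (rt k))) = p * f k + (1-p)/2"
      by (simp add: expval_depol f_def)
    then show ?thesis using False
      by (simp add: term_val herm_depol hrd hrt trd trt trace_depol a'_def f'_def a_def)
  qed
  have "fail_prob sg U p df = (1/32) * (\<Sum>d\<in>(UNIV::bool set). \<Sum>k<(8::nat). \<Sum>r\<in>(UNIV::bool set). gg (a' d) (f' k))"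
    unfolding fail_prob_def Let_def rd_def[symmetric] rt_def[symmetric]
    by (simp only: tm)
  also have "\<dots> = gg ((a' False + a' True)/2) ((\<Sum>k<8. f' k)/8)" by (rule sum_calc)
  also have "\<dots> = p * gg ((a False + a True)/2) ((\<Sum>k<8. f k)/8) + (1-p)/2"
  proof (cases df)
    case True
    have e: "(a' False + a' True)/2 = p * ((a False + a True)/2) + (1-p)/2"
      using True by (simp add: a'_def field_simps)
    have e2: "f' = f" using True by (simp add: f'_def fun_eq_iff)
    show ?thesis unfolding e e2 gg_dep1 ..
  next
    case False
    have "(\<Sum>k<(8::nat). f' k) = p * (\<Sum>k<8. f k) + 4 * (1-p)"
      using False by (simp add: f'_def sum.distrib sum_distrib_left[symmetric])
    then have e: "(\<Sum>k<(8::nat). f' k) / 8 = p * ((\<Sum>k<8. f k)/8) + (1-p)/2"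
      by (simp add: field_simps)
    have e2: "a' = a" using False by (simp add: a'_def fun_eq_iff)
    show ?thesis unfolding e e2 gg_dep2 ..
  qed
  finally have fp: "fail_prob sg U p df = p * gg ((a False + a True)/2) ((\<Sum>k<8. f k)/8) + (1-p)/2" .
  have Fd: "F_dummy sg U = (a False + a True)/2"
    by (simp add: F_dummy_def a_def rd_def expval_ket)
  have Ft: "F_trap sg U = (\<Sum>k<8. f k)/8"
    by (simp add: F_trap_def f_def rt_def)
  show ?thesis unfolding fp Fd Ft gg_def by (simp add: algebra_simps)
qed


theorem lemma3:
  fixes sg :: "(bool \<times> bool) qop" and U :: "bool qop"
    and R T :: real and M :: "'a measure" and dt :: "'a \<Rightarrow> real" and dummy_first :: "'a \<Rightarrow> bool"
  assumes "density sg" and "unitary_op U" and "R > 0" and "T > 0"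
    and "prob_space M"
    and "dt \<in> borel_measurable M"
    and "dummy_first \<in> measurable M (count_space UNIV)"
    and "AE \<omega> in M. 0 \<le> dt \<omega>"
    and "integrable M dt"
    and "(\<integral>\<omega>. dt \<omega> \<partial>M) = 1 / R"
    and "F_dummy sg U * (1 - F_trap sg U) + F_trap sg U * (1 - F_dummy sg U) \<le> 1 / 2"
  shows "(\<integral>\<omega>. fail_prob sg U (exp (- dt \<omega> / T)) (dummy_first \<omega>) \<partial>M)
           \<le> exp (- 1 / (R * T)) * (F_dummy sg U * (1 - F_trap sg U) + F_trap sg U * (1 - F_dummy sg U))
             + 1 / 2 * (1 - exp (- 1 / (R * T)))"
proof -
  interpret prob_space M by fact
  define Q where "Q = F_dummy sg U * (1 - F_trap sg U) + F_trap sg U * (1 - F_dummy sg U)"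
  define e where "e \<omega> = exp (- dt \<omega> / T)" for \<omega>
  define c where "c = exp (- 1 / (R * T))"
  have fp: "fail_prob sg U (e \<omega>) (dummy_first \<omega>) = e \<omega> * Q + (1 - e \<omega>)/2" for \<omega>
    using fail_formula[OF assms(1,2)] by (simp add: Q_def)
  have me: "e \<in> borel_measurable M" unfolding e_def using assms(6) by measurable
  have ie: "integrable M e"
  proof (rule Bochner_Integration.integrable_bound[where f="\<lambda>_. 1::real"])
    show "integrable M (\<lambda>_. 1::real)" by simp
    show "e \<in> borel_measurable M" by (rule me)
    show "AE x in M. norm (e x) \<le> norm (1::real)"
      using assms(8) by eventually_elim (use assms(4) in \<open>auto simp: e_def\<close>)
  qed
  have lin: "c * (1 - dt \<omega> / T + 1 / (R * T)) \<le> e \<omega>" for \<omega>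
  proof -
    have "1 + (- dt \<omega> / T + 1 / (R * T)) \<le> exp (- dt \<omega> / T + 1 / (R * T))"
      by (rule exp_ge_add_one_self)
    then have "c * (1 + (- dt \<omega> / T + 1 / (R * T))) \<le> c * exp (- dt \<omega> / T + 1 / (R * T))"
      by (simp add: c_def)
    also have "\<dots> = e \<omega>" by (simp add: c_def e_def flip: exp_add)
    finally show ?thesis by (simp add: algebra_simps)
  qed
  have il: "integrable M (\<lambda>\<omega>. c * (1 - dt \<omega> / T + 1 / (R * T)))"
    using assms(9) by simp
  have I: "(\<integral>\<omega>. c * (1 - dt \<omega> / T + 1 / (R * T)) \<partial>M) = c"
  proof -
    have "(\<integral>\<omega>. c * (1 - dt \<omega> / T + 1 / (R * T)) \<partial>M) = c * (1 - (1/R) / T + 1 / (R * T))"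
      using assms(9,10) by (simp add: prob_space)
    also have "\<dots> = c" by simp
    finally show ?thesis .
  qed
  have Ee: "c \<le> (\<integral>\<omega>. e \<omega> \<partial>M)"
    using integral_mono[OF il ie lin] unfolding I .
  have "(\<integral>\<omega>. fail_prob sg U (exp (- dt \<omega> / T)) (dummy_first \<omega>) \<partial>M)
       = (\<integral>\<omega>. e \<omega> * Q + (1 - e \<omega>)/2 \<partial>M)"
    using fp by (simp add: e_def)
  also have "\<dots> = (\<integral>\<omega>. e \<omega> \<partial>M) * Q + (1 - (\<integral>\<omega>. e \<omega> \<partial>M))/2"
    using ie by (simp add: prob_space)
  also have "\<dots> = 1/2 - (1/2 - Q) * (\<integral>\<omega>. e \<omega> \<partial>M)" by (simp add: field_simps)
  also have "\<dots> \<le> 1/2 - (1/2 - Q) * c"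
    using Ee assms(11) unfolding Q_def[symmetric] by (intro diff_left_mono mult_left_mono) auto
  also have "\<dots> = c * Q + 1/2 * (1 - c)" by (simp add: field_simps)
  finally show ?thesis by (simp add: Q_def c_def)
qed

end
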